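(* Let $\mathcal{I}$ be a $\sigma$-ideal on $\mathbb{R}$ satisfying the standing assumptions, and let $L\subseteq\mathbb{R}$ be an $\mathcal{I}$-Luzin set which is linearly independent over $\mathbb{Q}$. Then there exists a set $X\subseteq\mathbb{R}$ such that the family $\{x+L:x\in X\}$ is a partition of $\mathbb{R}$ (its members are pairwise disjoint and cover $\mathbb{R}$).
   Context: Standing assumptions on $\mathcal{I}$: $\mathcal{I}$ is a $\sigma$-ideal of subsets of $\mathbb{R}$ such that $\mathbb{R}\notin\mathcal{I}$; $x+I\in\mathcal{I}$ and $xI\in\mathcal{I}$ for all $x\in\mathbb{R}$, $I\in\mathcal{I}$; every member of $\mathcal{I}$ is contained in a Borel member of $\mathcal{I}$; and for all Borel $A,B\notin\mathcal{I}$ the set $A-B$ has nonempty interior. A set $L\subseteq\mathbb{R}$ is $\mathcal{I}$-Luzin if $|L|=\mathfrak{c}$ and $L\cap I$ is countable for every $I\in\mathcal{I}$. *)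

theory Defs
  imports "HOL-Analysis.Analysis" "HOL-Library.Equipollence"
begin

definition sigma_ideal :: "real set set \<Rightarrow> bool" where
  "sigma_ideal \<I> \<longleftrightarrow> {} \<in> \<I>
     \<and> (\<forall>A B. A \<in> \<I> \<and> B \<subseteq> A \<longrightarrow> B \<in> \<I>)
     \<and> (\<forall>F :: nat \<Rightarrow> real set. (\<forall>n. F n \<in> \<I>) \<longrightarrow> (\<Union>n. F n) \<in> \<I>)"

definition standing_assumptions :: "real set set \<Rightarrow> bool" where
  "standing_assumptions \<I> \<longleftrightarrow> sigma_ideal \<I>
     \<and> UNIV \<notin> \<I>
     \<and> (\<forall>x. \<forall>I\<in>\<I>. (\<lambda>y. x + y) ` I \<in> \<I> \<and> (\<lambda>y. x * y) ` I \<in> \<I>)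
     \<and> (\<forall>I\<in>\<I>. \<exists>B\<in>\<I>. B \<in> sets borel \<and> I \<subseteq> B)
     \<and> (\<forall>A B. A \<in> sets borel \<and> B \<in> sets borel \<and> A \<notin> \<I> \<and> B \<notin> \<I>
            \<longrightarrow> interior {a - b | a b. a \<in> A \<and> b \<in> B} \<noteq> {})"

definition Luzin :: "real set set \<Rightarrow> real set \<Rightarrow> bool" where
  "Luzin \<I> L \<longleftrightarrow> L \<approx> (UNIV :: real set) \<and> (\<forall>I\<in>\<I>. countable (L \<inter> I))"

definition rat_lin_indep :: "real set \<Rightarrow> bool" where
  "rat_lin_indep L \<longleftrightarrow> (\<forall>F c. finite F \<and> F \<subseteq> L \<and> (\<forall>x\<in>F. c x \<in> \<rat>)
      \<and> (\<Sum>x\<in>F. c x * x) = 0 \<longrightarrow> (\<forall>x\<in>F. c x = 0))"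

end

theory Submission imports Defs begin
unbundle cardinal_syntax

lemma indep_three:
  assumes ind: "rat_lin_indep L" and zL: "z \<notin> L"
    and abc: "a \<in> L" "b \<in> L" "c \<in> L" "z = a + b - c"
    and ll: "l \<in> L" "l1 \<in> L" "l2 \<in> L" "z = l + l1 - l2"
  shows "l \<in> {a,b,c}"
proof (rule ccontr)
  assume nl: "l \<notin> {a,b,c}"
  define ind where "ind p x = (if x = p then 1 else (0::real))" for p x :: real
  define cf where "cf x = ind l x + ind l1 x - ind l2 x - ind a x - ind b x + ind c x" for x
  define F where "F = {l,l1,l2,a,b,c}"
  have fin: "finite F" and sub: "F \<subseteq> L" using abc ll by (auto simp: F_def)
  have indsum: "(\<Sum>x\<in>F. ind p x * x) = p" if "p \<in> F" for p
  proof -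
    have "(\<Sum>x\<in>F. ind p x * x) = (\<Sum>x\<in>F. if x = p then x else 0)"
      by (rule sum.cong) (auto simp: ind_def)
    thus ?thesis using that fin by simp
  qed
  have rat: "\<forall>x\<in>F. cf x \<in> \<rat>" by (auto simp: cf_def ind_def)
  have "(\<Sum>x\<in>F. cf x * x) = (\<Sum>x\<in>F. ind l x * x) + (\<Sum>x\<in>F. ind l1 x * x) - (\<Sum>x\<in>F. ind l2 x * x)
      - (\<Sum>x\<in>F. ind a x * x) - (\<Sum>x\<in>F. ind b x * x) + (\<Sum>x\<in>F. ind c x * x)"
    by (simp add: cf_def algebra_simps sum.distrib sum_subtractf)
  also have "\<dots> = l + l1 - l2 - a - b + c" using indsum[of l] indsum[of l1] indsum[of l2] indsum[of a] indsum[of b] indsum[of c]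
    unfolding F_def by simp
  also have "\<dots> = 0" using abc ll by simp
  finally have "(\<Sum>x\<in>F. cf x * x) = 0" .
  hence "cf l = 0" using ind fin sub rat unfolding rat_lin_indep_def F_def by blast
  hence "l = l2 \<and> l \<noteq> l1" using nl by (auto simp: cf_def ind_def split: if_splits)
  hence "z = l1" using ll by simp
  thus False using zL ll by simp
qed

definition good :: "real set \<Rightarrow> real set \<Rightarrow> real \<Rightarrow> real \<Rightarrow> bool" where
  "good L Y a l \<longleftrightarrow> l \<in> L \<and> (\<forall>y\<in>Y. \<forall>l1\<in>L. \<forall>l2\<in>L. a - l + l1 \<noteq> y + l2)"

lemma fin_lt_inf:
  assumes "finite A" "\<not> finite B"
  shows "|A| <o |B|"
  using finite_ordLess_infinite[OF card_of_Well_order card_of_Well_order, unfolded Field_card_of] assms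
  by blast

lemma small_lt:
  fixes Y :: "real set"
  assumes "|Y| <o |UNIV :: real set|"
  shows "|Y \<times> {0,1,2::nat}| <o |UNIV :: real set|"
proof (cases "finite Y")
  case True
  have inf: "\<not> finite (UNIV :: real set)" by (rule infinite_UNIV_char_0)
  have "finite (Y \<times> {0,1,2::nat})" using True by simp
  thus ?thesis using fin_lt_inf inf by blast
next
  case False
  have "|{0,1,2::nat}| <o |Y|" by (rule fin_lt_inf) (use False in auto)
  hence "|{0,1,2::nat}| \<le>o |Y|" by (rule ordLess_imp_ordLeq)
  hence "|Y \<times> {0,1,2::nat}| =o |Y|"
    using card_of_Times_infinite[OF False, of "{0,1,2::nat}"] by simp
  thus ?thesis using assms ordIso_ordLess_trans by blast
qed

lemma exists_good:
  assumes ind: "rat_lin_indep L" and LU: "L \<approx> (UNIV :: real set)"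
    and Ys: "|Y| <o |UNIV :: real set|" and nY: "\<forall>y\<in>Y. a - y \<notin> L"
  shows "\<exists>l. good L Y a l"
proof -
  define Bad where "Bad y = {l\<in>L. \<exists>l1\<in>L. \<exists>l2\<in>L. a - l + l1 = y + l2}" for y
  have "\<exists>h. Bad y \<subseteq> h ` {0,1,2::nat}" if "y \<in> Y" for y
  proof (cases "Bad y = {}")
    case True thus ?thesis by auto
  next
    case False
    then obtain p q r where pqr: "p \<in> L" "q \<in> L" "r \<in> L" "a - p + q = y + r"
      unfolding Bad_def by blast
    define h where "h i = (if i = (0::nat) then p else if i = 1 then r else q)" for i
    have "Bad y \<subseteq> {p, r, q}"
    proof
      fix l assume "l \<in> Bad y"
      then obtain l1 l2 where "l \<in> L" "l1 \<in> L" "l2 \<in> L" "a - l + l1 = y + l2"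
        unfolding Bad_def by blast
      moreover have "a - y \<notin> L" using nY that by blast
      moreover have "a - y = p + r - q" using pqr by simp
      moreover have "a - y = l + l2 - l1" using \<open>a - l + l1 = y + l2\<close> by simp
      ultimately show "l \<in> {p, r, q}"
        using indep_three[OF ind, of "a - y" p r q l l2 l1] pqr by blast
    qed
    moreover have "{p, r, q} = h ` {0,1,2}" by (auto simp: h_def)
    ultimately show ?thesis by blast
  qed
  then obtain h where h: "\<And>y. y \<in> Y \<Longrightarrow> Bad y \<subseteq> h y ` {0,1,2::nat}" by metis
  have "(\<Union>y\<in>Y. Bad y) \<subseteq> (\<lambda>(y,i). h y i) ` (Y \<times> {0,1,2::nat})"
  proof
    fix l assume "l \<in> (\<Union>y\<in>Y. Bad y)"
    then obtain y where y: "y \<in> Y" "l \<in> Bad y" by blast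
    then obtain i where "i \<in> {0,1,2::nat}" "l = h y i" using h by blast
    thus "l \<in> (\<lambda>(y,i). h y i) ` (Y \<times> {0,1,2::nat})" using y by force
  qed
  hence "|\<Union>y\<in>Y. Bad y| \<le>o |Y \<times> {0,1,2::nat}|"
    using card_of_mono1 card_of_image[of "\<lambda>(y,i). h y i" "Y \<times> {0,1,2::nat}"] ordLeq_transitive
    by blast
  hence small: "|\<Union>y\<in>Y. Bad y| <o |UNIV :: real set|"
    using small_lt[OF Ys] ordLeq_ordLess_trans by blast
  have "\<not> L \<subseteq> (\<Union>y\<in>Y. Bad y)"
  proof
    assume "L \<subseteq> (\<Union>y\<in>Y. Bad y)"
    hence "|L| \<le>o |\<Union>y\<in>Y. Bad y|" by (rule card_of_mono1)
    moreover have "|UNIV :: real set| \<le>o |L|"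
      using LU unfolding eqpoll_iff_card_of_ordIso
      using ordIso_symmetric ordIso_imp_ordLeq by blast
    ultimately have "|UNIV :: real set| \<le>o |\<Union>y\<in>Y. Bad y|"
      using ordLeq_transitive by blast
    thus False using small not_ordLess_ordLeq by blast
  qed
  then obtain l where "l \<in> L" "l \<notin> (\<Union>y\<in>Y. Bad y)" by blast
  thus ?thesis unfolding good_def Bad_def by auto
qed

definition Dj :: "real set \<Rightarrow> real set \<Rightarrow> bool" where
  "Dj L X \<longleftrightarrow> (\<forall>x\<in>X. \<forall>y\<in>X. x \<noteq> y \<longrightarrow> (\<forall>l1\<in>L. \<forall>l2\<in>L. x + l1 \<noteq> y + l2))"

theorem mainTheorem14:
  fixes \<I> :: "real set set" and L :: "real set"
  assumes "standing_assumptions \<I>"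
    and "Luzin \<I> L"
    and "rat_lin_indep L"
  shows "\<exists>X :: real set.
           (\<forall>x\<in>X. \<forall>y\<in>X. x \<noteq> y \<longrightarrow> ((\<lambda>l. x + l) ` L) \<inter> ((\<lambda>l. y + l) ` L) = {})
         \<and> (\<Union>x\<in>X. (\<lambda>l. x + l) ` L) = UNIV"
proof -
  have LU: "L \<approx> (UNIV :: real set)" using assms(2) unfolding Luzin_def by blast
  have ind: "rat_lin_indep L" by fact
  define W where "W = |UNIV :: real set|"
  have WO: "well_order_on UNIV W"
    using card_of_Well_order[of "UNIV :: real set"] unfolding W_def Field_card_of .
  have FW: "Field W = UNIV" unfolding W_def Field_card_of ..
  have reflW: "(a, a) \<in> W" for a
    using WO unfolding well_order_on_def linear_order_on_def partial_order_on_def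
      preorder_on_def refl_on_def by blast
  have transW: "trans W"
    using WO unfolding well_order_on_def linear_order_on_def partial_order_on_def
      preorder_on_def by blast
  have totW: "(a, b) \<in> W \<or> (b, a) \<in> W" for a b
  proof (cases "a = b")
    case True thus ?thesis using reflW by blast
  next
    case False thus ?thesis
      using WO unfolding well_order_on_def linear_order_on_def total_on_def by blast
  qed
  define R where "R = W - Id"
  have wfR: "wf R" using WO unfolding well_order_on_def R_def by blast
  have underS_R: "underS W a = {b. (b, a) \<in> R}" for a
    by (auto simp: underS_def R_def)
  define Fs where "Fs g a = (let Y = g ` underS W a in
      if \<exists>y\<in>Y. a - y \<in> L then (SOME y. y \<in> Y \<and> a - y \<in> L)
      else a - (SOME l. good L Y a l))" for g :: "real \<Rightarrow> real" and a
  define xf where "xf = wfrec R Fs"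
  have rec: "xf a = Fs xf a" for a
  proof -
    have "xf a = Fs (cut xf R a) a" unfolding xf_def by (rule wfrec[OF wfR])
    moreover have "cut xf R a ` underS W a = xf ` underS W a"
      unfolding underS_R by (auto simp: cut_apply)
    ultimately show ?thesis unfolding Fs_def by simp
  qed
  have small: "|xf ` underS W a| <o |UNIV :: real set|" for a
  proof -
    have "|underS W a| <o W"
      using card_of_underS[of W a, OF _] card_of_Card_order[of "UNIV :: real set"] FW
      unfolding W_def by simp
    thus ?thesis using card_of_image ordLeq_ordLess_trans unfolding W_def by blast
  qed
  have step: "(\<exists>l\<in>L. a = xf a + l) \<and> (xf a \<in> xf ` underS W a \<or> good L (xf ` underS W a) a (a - xf a))" for a
  proof (cases "\<exists>y\<in>xf ` underS W a. a - y \<in> L")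
    case True
    hence x: "xf a = (SOME y. y \<in> xf ` underS W a \<and> a - y \<in> L)"
      using rec[of a] unfolding Fs_def Let_def by simp
    have "xf a \<in> xf ` underS W a \<and> a - xf a \<in> L"
      unfolding x by (rule someI_ex) (use True in blast)
    thus ?thesis by (metis add_diff_cancel_left' add_diff_eq)
  next
    case False
    hence x: "xf a = a - (SOME l. good L (xf ` underS W a) a l)"
      using rec[of a] unfolding Fs_def Let_def by simp
    have "\<exists>l. good L (xf ` underS W a) a l"
      using exists_good[OF ind LU small] False by blast
    hence g: "good L (xf ` underS W a) a (SOME l. good L (xf ` underS W a) a l)"
      by (rule someI_ex)
    have "a - xf a = (SOME l. good L (xf ` underS W a) a l)" unfolding x by simp
    hence "good L (xf ` underS W a) a (a - xf a)" using g by simp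
    moreover hence "a - xf a \<in> L" unfolding good_def by blast
    ultimately show ?thesis by force
  qed
  have inv: "Dj L (xf ` under W a)" for a
  proof (induction a rule: wf_induct[OF wfR])
    case (1 a)
    define Y where "Y = xf ` underS W a"
    have DY: "Dj L Y"
      unfolding Dj_def
    proof (intro ballI impI)
      fix x y l1 l2 assume xy: "x \<in> Y" "y \<in> Y" "x \<noteq> y" and l: "l1 \<in> L" "l2 \<in> L"
      then obtain b1 b2 where b: "b1 \<in> underS W a" "b2 \<in> underS W a" "x = xf b1" "y = xf b2"
        unfolding Y_def by blast
      show "x + l1 \<noteq> y + l2"
      proof (cases "(b1, b2) \<in> W")
        case True
        have "Dj L (xf ` under W b2)" using 1 b(2) underS_R by blast
        moreover have "x \<in> xf ` under W b2" "y \<in> xf ` under W b2"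
          using b True reflW by (auto simp: under_def)
        ultimately show ?thesis using xy l unfolding Dj_def by blast
      next
        case False
        hence T: "(b2, b1) \<in> W" using totW by blast
        have "Dj L (xf ` under W b1)" using 1 b(1) underS_R by blast
        moreover have "x \<in> xf ` under W b1" "y \<in> xf ` under W b1"
          using b T reflW by (auto simp: under_def)
        ultimately show ?thesis using xy l unfolding Dj_def by blast
      qed
    qed
    have U: "xf ` under W a = insert (xf a) Y"
      unfolding Y_def using reflW by (auto simp: under_def underS_def)
    show ?case
    proof (cases "xf a \<in> Y")
      case True thus ?thesis using U DY by (simp add: insert_absorb)
    next
      case False
      hence g: "good L Y a (a - xf a)" using step[of a] unfolding Y_def by blast
      show ?thesis unfolding U Dj_def
      proof (intro ballI impI)
        fix x y l1 l2 assume xy: "x \<in> insert (xf a) Y" "y \<in> insert (xf a) Y" "x \<noteq> y"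
          and l: "l1 \<in> L" "l2 \<in> L"
        show "x + l1 \<noteq> y + l2"
        proof (cases "x = xf a")
          case True
          hence "y \<in> Y" using xy by blast
          thus ?thesis using g l True unfolding good_def by force
        next
          case xn: False
          show ?thesis
          proof (cases "y = xf a")
            case True
            hence "x \<in> Y" using xy xn by blast
            hence "a - (a - xf a) + l2 \<noteq> x + l1" using g l unfolding good_def by blast
            thus ?thesis using True by simp
          next
            case False
            thus ?thesis using xy xn DY l unfolding Dj_def by blast
          qed
        qed
      qed
    qed
  qed
  show ?thesis
  proof (intro exI conjI)
    show "\<forall>x\<in>range xf. \<forall>y\<in>range xf. x \<noteq> y \<longrightarrow> ((\<lambda>l. x + l) ` L) \<inter> ((\<lambda>l. y + l) ` L) = {}"
    proof (intro ballI impI)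
      fix x y assume "x \<in> range xf" "y \<in> range xf" "x \<noteq> y"
      then obtain b1 b2 where b: "x = xf b1" "y = xf b2" by blast
      have "\<exists>c. x \<in> xf ` under W c \<and> y \<in> xf ` under W c"
        using totW[of b1 b2] reflW b by (auto simp: under_def)
      then obtain c where "x \<in> xf ` under W c" "y \<in> xf ` under W c" by blast
      hence "\<forall>l1\<in>L. \<forall>l2\<in>L. x + l1 \<noteq> y + l2"
        using inv[of c] \<open>x \<noteq> y\<close> unfolding Dj_def by blast
      thus "((\<lambda>l. x + l) ` L) \<inter> ((\<lambda>l. y + l) ` L) = {}" by auto
    qed
    show "(\<Union>x\<in>range xf. (\<lambda>l. x + l) ` L) = UNIV"
    proof (rule set_eqI, rule iffI)
      fix r :: real
      obtain l where "l \<in> L" "r = xf r + l" using step[of r] by blast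
      thus "r \<in> (\<Union>x\<in>range xf. (\<lambda>l. x + l) ` L)" by blast
    qed simp
  qed
qed

end
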